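(* If $G\subset\mathbb{R}^2$ is (the open domain bounded by) a rhombus with smallest angle $\alpha$, then \[ A_G\ge\frac{2}{\sin\frac{\alpha}{2}}. \]
   Context: For a domain $G\subsetneq\mathbb{R}^n$ let $d_G(x)=d(x,\partial G)$; $k_G(x,y)=\inf_\gamma\int_\gamma\frac{|dx|}{d_G(x)}$ over rectifiable curves $\gamma\subset G$ joining $x,y$ (quasihyperbolic distance); $j_G(x,y)=\log\left(1+\frac{|x-y|}{\min\{d_G(x),d_G(y)\}}\right)$; and the uniformity constant is $A_G=\inf\{A\ge1: k_G\le A\,j_G\text{ on }G\times G\}$ (with $\inf\emptyset=+\infty$). *)

theory Defs
  imports "HOL-Analysis.Analysis"
begin

type_synonym R2 = "real ^ 2"

definition dG :: "R2 set \<Rightarrow> R2 \<Rightarrow> real" where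
  "dG G x = infdist x (frontier G)"

definition qh_length :: "R2 set \<Rightarrow> (real \<Rightarrow> R2) \<Rightarrow> real" where
  "qh_length G g = integral {0..1} (\<lambda>t. norm (vector_derivative g (at t)) / dG G (g t))"

definition qh_admissible :: "R2 set \<Rightarrow> R2 \<Rightarrow> R2 \<Rightarrow> (real \<Rightarrow> R2) \<Rightarrow> bool" where
  "qh_admissible G x y g \<longleftrightarrow> path g \<and> g piecewise_C1_differentiable_on {0..1}
     \<and> path_image g \<subseteq> G \<and> pathstart g = x \<and> pathfinish g = y
     \<and> (\<lambda>t. norm (vector_derivative g (at t)) / dG G (g t)) integrable_on {0..1}"

definition kG :: "R2 set \<Rightarrow> R2 \<Rightarrow> R2 \<Rightarrow> real" where
  "kG G x y = Inf {qh_length G g | g. qh_admissible G x y g}"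

definition jG :: "R2 set \<Rightarrow> R2 \<Rightarrow> R2 \<Rightarrow> real" where
  "jG G x y = ln (1 + dist x y / min (dG G x) (dG G y))"

text \<open>Uniformity constant A_G (Inf of the empty set is +infinity).\<close>
definition uniformity_constant :: "R2 set \<Rightarrow> ereal" where
  "uniformity_constant G =
     Inf (ereal ` {A. 1 \<le> A \<and> (\<forall>x\<in>G. \<forall>y\<in>G. kG G x y \<le> A * jG G x y)})"

definition vec_angle :: "R2 \<Rightarrow> R2 \<Rightarrow> real" where
  "vec_angle a b = arccos (inner a b / (norm a * norm b))"

definition rhombus_domain :: "R2 set \<Rightarrow> real \<Rightarrow> bool" where
  "rhombus_domain G \<alpha> \<longleftrightarrow> (\<exists>p a b. a \<noteq> 0 \<and> norm a = norm b
     \<and> 0 < vec_angle a b \<and> vec_angle a b < pi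
     \<and> G = interior (convex hull {p, p + a, p + a + b, p + b})
     \<and> \<alpha> = min (vec_angle a b) (pi - vec_angle a b))"

end

theory Submission
  imports Defs
begin

lemma inner2: "inner (x::real^2) y = x$1*y$1 + x$2*y$2"
  by (simp add: inner_vec_def sum_2)
lemma normsq2: "(norm (x::real^2))^2 = (x$1)^2 + (x$2)^2"
  by (metis power2_norm_eq_inner inner2 power2_eq_square)
lemma vec2_eq: "(x::real^2) = y \<longleftrightarrow> x$1 = y$1 \<and> x$2 = y$2"
  by (simp add: vec_eq_iff forall_2)

lemma proj_bound:
  fixes u v w :: "real^2"
  assumes uu: "inner u u = L2" and vv: "inner v v = L2" and uv: "inner u v = L2*c"
    and c: "0 \<le> c" "c \<le> 1" and L2: "0 < L2" and st: "0 \<le> t" "t \<le> s"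
    and w: "w = s *\<^sub>R u + t *\<^sub>R v"
  shows "norm (w - (s + t*c) *\<^sub>R u) \<le> sqrt ((1-c)/2) * norm w"
proof -
  have vu: "inner v u = L2*c" using uv by (simp add: inner_commute)
  have e1: "(norm w)^2 = L2*(s^2+t^2+2 * s * t * c)"
    unfolding power2_norm_eq_inner w
    by (simp add: inner_add_left inner_add_right uu vv uv vu algebra_simps power2_eq_square)
  have e2: "(norm (w - (s + t*c) *\<^sub>R u))^2 = L2*(t^2*(1-c^2))"
    unfolding power2_norm_eq_inner w
    by (simp add: inner_add_left inner_add_right inner_diff_left inner_diff_right uu vv uv vu algebra_simps power2_eq_square)
  have key: "2*t^2*(1+c) \<le> s^2+t^2+2 * s * t * c"
  proof -
    have "0 \<le> (s - t) * (s + t) + 2*c*t*(s-t)" using st c by (intro add_nonneg_nonneg mult_nonneg_nonneg) auto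
    then show ?thesis by (simp add: algebra_simps power2_eq_square)
  qed
  have "L2*(t^2*(1-c^2)) = L2*(1-c)/2 * (2*t^2*(1+c))" by (simp add: field_simps power2_eq_square)
  also have "\<dots> \<le> L2*(1-c)/2 * (s^2+t^2+2 * s * t * c)" using key L2 c by (intro mult_left_mono) auto
  finally have "(norm (w - (s + t*c) *\<^sub>R u))^2 \<le> (1-c)/2 * (norm w)^2" unfolding e1 e2 by (simp add: algebra_simps)
  then have "sqrt ((norm (w - (s + t*c) *\<^sub>R u))^2) \<le> sqrt ((1-c)/2 * (norm w)^2)" by (rule real_sqrt_le_mono)
  moreover have "sqrt ((1-c)/2 * (norm w)^2) = sqrt ((1-c)/2) * norm w"
    by (simp only: real_sqrt_mult real_sqrt_abs abs_norm_cancel)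
  ultimately show ?thesis by (simp add: real_sqrt_mult)
qed

locale rh =
  fixes p a b :: "real^2" and G :: "(real^2) set"
  assumes anz: "a \<noteq> 0" and nab: "norm a = norm b" and ipos: "inner a b \<ge> 0"
    and detnz: "a$1*b$2 - a$2*b$1 \<noteq> 0"
    and Gdef: "G = interior (convex hull {p, p+a, p+a+b, p+b})"
begin

definition "dt = a$1*b$2 - a$2*b$1"
definition "cs z = ((z-p)$1*b$2 - (z-p)$2*b$1)/dt"
definition "ct z = (a$1*(z-p)$2 - a$2*(z-p)$1)/dt"
definition "P = {z. 0 \<le> cs z \<and> cs z \<le> 1 \<and> 0 \<le> ct z \<and> ct z \<le> 1}"

lemma dtnz: "dt \<noteq> 0" using detnz by (simp add: dt_def)

lemma coord_eq: "z = p + cs z *\<^sub>R a + ct z *\<^sub>R b"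
proof -
  have d: "dt \<noteq> 0" by (rule dtnz)
  have 1: "cs z * a$1 + ct z * b$1 = (z-p)$1"
    using d unfolding cs_def ct_def dt_def by (simp add: divide_simps) algebra
  have 2: "cs z * a$2 + ct z * b$2 = (z-p)$2"
    using d unfolding cs_def ct_def dt_def by (simp add: divide_simps) algebra
  show ?thesis using 1 2 unfolding vec2_eq by (simp add: algebra_simps)
qed

lemma cs_lin: "cs (p + s *\<^sub>R a + t *\<^sub>R b) = s" and ct_lin: "ct (p + s *\<^sub>R a + t *\<^sub>R b) = t"
  using dtnz unfolding cs_def ct_def dt_def by (simp_all add: divide_simps; algebra)+

lemma cs_diff: "cs z - cs y = ((z-y)$1*b$2 - (z-y)$2*b$1)/dt"
  unfolding cs_def by (simp add: diff_divide_distrib[symmetric] algebra_simps)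
lemma ct_diff: "ct z - ct y = (a$1*(z-y)$2 - a$2*(z-y)$1)/dt"
  unfolding ct_def by (simp add: diff_divide_distrib[symmetric] algebra_simps)

lemma cs_comb: assumes "u + v = 1" shows "cs (u *\<^sub>R x + v *\<^sub>R y) = u * cs x + v * cs y"
proof -
  have h: "\<And>z. cs z * dt = (z-p)$1*b$2 - (z-p)$2*b$1" using dtnz by (simp add: cs_def)
  have v: "v = 1 - u" using assms by simp
  have "cs (u *\<^sub>R x + v *\<^sub>R y) * dt = (u * cs x + v * cs y) * dt"
    unfolding distrib_right mult.assoc h unfolding v by (simp add: algebra_simps)
  then show ?thesis using dtnz by simp
qed
lemma ct_comb: assumes "u + v = 1" shows "ct (u *\<^sub>R x + v *\<^sub>R y) = u * ct x + v * ct y"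
proof -
  have h: "\<And>z. ct z * dt = a$1*(z-p)$2 - a$2*(z-p)$1" using dtnz by (simp add: ct_def)
  have v: "v = 1 - u" using assms by simp
  have "ct (u *\<^sub>R x + v *\<^sub>R y) * dt = (u * ct x + v * ct y) * dt"
    unfolding distrib_right mult.assoc h unfolding v by (simp add: algebra_simps)
  then show ?thesis using dtnz by simp
qed

lemma convex_P: "convex P"
proof (rule convexI)
  fix x y and u v :: real assume "x \<in> P" "y \<in> P" "0 \<le> u" "0 \<le> v" "u + v = 1"
  then show "u *\<^sub>R x + v *\<^sub>R y \<in> P"
  proof -
    have "u * cs x + v * cs y \<le> u * 1 + v * 1" "u * ct x + v * ct y \<le> u * 1 + v * 1"
      using \<open>x \<in> P\<close> \<open>y \<in> P\<close> \<open>0 \<le> u\<close> \<open>0 \<le> v\<close>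
      by (auto simp: P_def intro!: add_mono mult_left_mono mult_left_le)
    then show ?thesis
      using \<open>x \<in> P\<close> \<open>y \<in> P\<close> \<open>0 \<le> u\<close> \<open>0 \<le> v\<close> \<open>u+v=1\<close>
      by (auto simp: P_def cs_comb ct_comb)
  qed
qed

lemma hull_eq_P: "convex hull {p, p+a, p+a+b, p+b} = P"
proof
  show "convex hull {p, p+a, p+a+b, p+b} \<subseteq> P"
  proof (rule hull_minimal)
    show "convex P" by (rule convex_P)
    show "{p, p+a, p+a+b, p+b} \<subseteq> P"
      using cs_lin[of 1 1] ct_lin[of 1 1] cs_lin[of 1 0] ct_lin[of 1 0]
        cs_lin[of 0 1] ct_lin[of 0 1] cs_lin[of 0 0] ct_lin[of 0 0]
      by (simp add: P_def)
  qed
next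
  show "P \<subseteq> convex hull {p, p+a, p+a+b, p+b}"
  proof
    fix z assume "z \<in> P"
    define s where "s = cs z"
    define t where "t = ct z"
    have st: "0 \<le> s" "s \<le> 1" "0 \<le> t" "t \<le> 1" using \<open>z \<in> P\<close> by (auto simp: P_def s_def t_def)
    let ?H = "convex hull {p, p+a, p+a+b, p+b}"
    have cv: "convex ?H" by simp
    have h: "p \<in> ?H" "p+a \<in> ?H" "p+a+b \<in> ?H" "p+b \<in> ?H" by (auto intro: hull_inc)
    have u: "(1-s) *\<^sub>R p + s *\<^sub>R (p+a) \<in> ?H"
      by (rule convexD[OF cv h(1) h(2)]) (use st in auto)
    have w: "(1-s) *\<^sub>R (p+b) + s *\<^sub>R (p+a+b) \<in> ?H"
      by (rule convexD[OF cv h(4) h(3)]) (use st in auto)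
    have "(1-t) *\<^sub>R ((1-s) *\<^sub>R p + s *\<^sub>R (p+a)) + t *\<^sub>R ((1-s) *\<^sub>R (p+b) + s *\<^sub>R (p+a+b)) \<in> ?H"
      by (rule convexD[OF cv u w]) (use st in auto)
    moreover have "(1-t) *\<^sub>R ((1-s) *\<^sub>R p + s *\<^sub>R (p+a)) + t *\<^sub>R ((1-s) *\<^sub>R (p+b) + s *\<^sub>R (p+a+b)) = z"
    proof -
      have zz: "z = p + s *\<^sub>R a + t *\<^sub>R b" unfolding s_def t_def by (rule coord_eq)
      show ?thesis unfolding zz vec2_eq by (simp add: algebra_simps)
    qed
    ultimately show "z \<in> ?H" by simp
  qed
qed

lemma G_eq: "G = interior P" using Gdef hull_eq_P by simp

definition "NN = \<bar>a$1\<bar> + \<bar>a$2\<bar> + \<bar>b$1\<bar> + \<bar>b$2\<bar>"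
definition "kap = \<bar>dt\<bar> / NN"

lemma NN_pos: "NN > 0"
proof -
  have "a$1 \<noteq> 0 \<or> a$2 \<noteq> 0" using anz by (auto simp: vec2_eq)
  then show ?thesis unfolding NN_def by auto
qed

lemma kap_pos: "kap > 0" using NN_pos dtnz by (simp add: kap_def)

lemma cs_close: "\<bar>cs z - cs y\<bar> \<le> dist z y * NN / \<bar>dt\<bar>"
proof -
  have "\<bar>(z-y)$1*b$2 - (z-y)$2*b$1\<bar> \<le> \<bar>(z-y)$1\<bar>*\<bar>b$2\<bar> + \<bar>(z-y)$2\<bar>*\<bar>b$1\<bar>"
    using abs_triangle_ineq4[of "(z-y)$1*b$2" "(z-y)$2*b$1"] by (simp add: abs_mult)
  also have "\<dots> \<le> dist z y * \<bar>b$2\<bar> + dist z y *\<bar>b$1\<bar>"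
    using component_le_norm_cart[of "z-y"] by (intro add_mono mult_right_mono) (auto simp: dist_norm)
  also have "\<dots> \<le> dist z y * NN" unfolding NN_def distrib_left[symmetric]
    by (rule mult_left_mono) auto
  finally have f: "\<bar>(z-y)$1*b$2 - (z-y)$2*b$1\<bar> \<le> dist z y * NN" .
  have "\<bar>cs z - cs y\<bar> = \<bar>(z-y)$1*b$2 - (z-y)$2*b$1\<bar> / \<bar>dt\<bar>" by (simp only: cs_diff abs_divide)
  then show ?thesis using divide_right_mono[OF f, of "\<bar>dt\<bar>"] by simp
qed

lemma ct_close: "\<bar>ct z - ct y\<bar> \<le> dist z y * NN / \<bar>dt\<bar>"
proof -
  have "\<bar>a$1*(z-y)$2 - a$2*(z-y)$1\<bar> \<le> \<bar>a$1\<bar>*\<bar>(z-y)$2\<bar> + \<bar>a$2\<bar>*\<bar>(z-y)$1\<bar>"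
    using abs_triangle_ineq4[of "a$1*(z-y)$2" "a$2*(z-y)$1"] by (simp add: abs_mult)
  also have "\<dots> \<le> \<bar>a$1\<bar> * dist z y + \<bar>a$2\<bar> * dist z y"
    using component_le_norm_cart[of "z-y"] by (intro add_mono mult_left_mono) (auto simp: dist_norm)
  also have "\<dots> \<le> NN * dist z y" unfolding NN_def distrib_right[symmetric]
    by (rule mult_right_mono) auto
  finally have f: "\<bar>a$1*(z-y)$2 - a$2*(z-y)$1\<bar> \<le> dist z y * NN" by (simp add: mult.commute)
  have "\<bar>ct z - ct y\<bar> = \<bar>a$1*(z-y)$2 - a$2*(z-y)$1\<bar> / \<bar>dt\<bar>" by (simp only: ct_diff abs_divide)
  then show ?thesis using divide_right_mono[OF f, of "\<bar>dt\<bar>"] by simp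
qed

lemma ball_in_G:
  assumes "0 < e" "e \<le> s" "s \<le> 1 - e" "e \<le> t" "t \<le> 1 - e"
  shows "ball (p + s *\<^sub>R a + t *\<^sub>R b) (kap * e) \<subseteq> G"
proof -
  let ?x = "p + s *\<^sub>R a + t *\<^sub>R b"
  have "ball ?x (kap * e) \<subseteq> P"
  proof
    fix z assume "z \<in> ball ?x (kap * e)"
    then have dz: "dist z ?x < kap * e" by (simp add: dist_commute)
    have "dist z ?x * NN / \<bar>dt\<bar> < e"
      using dz NN_pos dtnz by (simp add: kap_def divide_simps mult.commute)
    then have "\<bar>cs z - s\<bar> < e" "\<bar>ct z - t\<bar> < e"
      using cs_close[of z ?x] ct_close[of z ?x] by (auto simp: cs_lin ct_lin)
    then show "z \<in> P" using assms by (auto simp: P_def)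
  qed
  then show ?thesis unfolding G_eq by (rule interior_maximal) simp
qed


lemma bnz: "b \<noteq> 0" using anz nab by auto

lemma G_open: "open G" using G_eq by simp
lemma G_sub_P: "G \<subseteq> P" using G_eq interior_subset by blast
lemma P_bounded: "bounded P"
  unfolding hull_eq_P[symmetric] by (simp add: compact_imp_bounded compact_convex_hull)
lemma G_bounded: "bounded G" using G_sub_P P_bounded bounded_subset by blast
lemma G_ne: "G \<noteq> {}"
proof -
  have "ball (p + (1/2) *\<^sub>R a + (1/2) *\<^sub>R b) (kap * (1/4)) \<subseteq> G"
    by (rule ball_in_G) auto
  moreover have "p + (1/2) *\<^sub>R a + (1/2) *\<^sub>R b \<in> ball (p + (1/2) *\<^sub>R a + (1/2) *\<^sub>R b) (kap * (1/4))"
    using kap_pos by simp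
  ultimately show ?thesis by blast
qed
lemma G_not_UNIV: "G \<noteq> UNIV" using G_bounded not_bounded_UNIV by auto
lemma fr_ne: "frontier G \<noteq> {}" using G_ne G_not_UNIV frontier_eq_empty by blast
lemma fr_disj: "z \<in> G \<Longrightarrow> z \<notin> frontier G"
  using G_open by (simp add: frontier_def interior_open)

lemma dG_pos: "z \<in> G \<Longrightarrow> 0 < dG G z"
  unfolding dG_def by (rule infdist_pos_not_in_closed) (auto simp: fr_ne fr_disj)

lemma dG_ge: assumes "ball z r \<subseteq> G" shows "r \<le> dG G z"
proof -
  obtain y where y: "y \<in> frontier G" "infdist z (frontier G) = dist z y"
    using infdist_attains_inf[of "frontier G" z] fr_ne by auto
  have "y \<notin> ball z r" using y(1) assms fr_disj by blast
  then show ?thesis using y(2) by (simp add: dG_def)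
qed

lemma dG_le: "q \<in> frontier G \<Longrightarrow> dG G z \<le> dist z q"
  unfolding dG_def by (rule infdist_le)

lemma int_P_ne: "interior P \<noteq> {}" using G_ne G_eq by simp

lemma P_closed: "closed P"
  unfolding hull_eq_P[symmetric] by (simp add: compact_imp_closed compact_convex_hull)

lemma closure_G: "closure G = P"
  using convex_closure_interior[OF convex_P int_P_ne] P_closed G_eq by (simp add: closure_closed)

lemma side_a_fr: assumes "0 \<le> l" "l \<le> 1" shows "p + l *\<^sub>R a \<in> frontier G"
proof -
  let ?q = "p + l *\<^sub>R a"
  have qP: "?q \<in> P" using assms cs_lin[of l 0] ct_lin[of l 0] by (simp add: P_def)
  have "?q \<notin> G"
  proof
    assume "?q \<in> G"
    then obtain e where e: "e > 0" "ball ?q e \<subseteq> P" using G_eq by (auto simp: mem_interior)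
    define d where "d = e / (2 * norm b)"
    have d: "d > 0" using e bnz by (simp add: d_def)
    have "dist ?q (?q - d *\<^sub>R b) = e/2" using bnz e by (simp add: d_def dist_norm)
    then have "?q - d *\<^sub>R b \<in> P" using e by auto
    moreover have "ct (?q - d *\<^sub>R b) = - d"
      using ct_lin[of l "-d"] by (simp add: algebra_simps)
    ultimately show False using d by (simp add: P_def)
  qed
  then show ?thesis using qP closure_G G_open by (simp add: frontier_def interior_open)
qed

lemma side_b_fr: assumes "0 \<le> l" "l \<le> 1" shows "p + l *\<^sub>R b \<in> frontier G"
proof -
  let ?q = "p + l *\<^sub>R b"
  have qP: "?q \<in> P" using assms cs_lin[of 0 l] ct_lin[of 0 l] by (simp add: P_def)
  have "?q \<notin> G"
  proof
    assume "?q \<in> G"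
    then obtain e where e: "e > 0" "ball ?q e \<subseteq> P" using G_eq by (auto simp: mem_interior)
    define d where "d = e / (2 * norm a)"
    have d: "d > 0" using e anz by (simp add: d_def)
    have "dist ?q (?q - d *\<^sub>R a) = e/2" using anz e by (simp add: d_def dist_norm)
    then have "?q - d *\<^sub>R a \<in> P" using e by auto
    moreover have "cs (?q - d *\<^sub>R a) = - d"
      using cs_lin[of "-d" l] by (simp add: algebra_simps)
    ultimately show False using d by (simp add: P_def)
  qed
  then show ?thesis using qP closure_G G_open by (simp add: frontier_def interior_open)
qed

lemma near_vertex:
  assumes z: "z \<in> G" and zr: "norm (z - p) \<le> norm a / 2"
  shows "dG G z \<le> sqrt ((1 - inner a b / (norm a)^2)/2) * norm (z - p)"
proof -
  define L2 where "L2 = (norm a)^2"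
  define c where "c = inner a b / L2"
  have L2: "L2 > 0" using anz by (simp add: L2_def)
  have aa: "inner a a = L2" by (simp add: L2_def power2_norm_eq_inner)
  have bb: "inner b b = L2" using nab by (simp add: L2_def power2_norm_eq_inner[symmetric])
  have ab: "inner a b = L2 * c" using L2 by (simp add: c_def)
  have ba: "inner b a = L2 * c" using ab by (simp add: inner_commute)
  have c0: "0 \<le> c" using ipos L2 by (simp add: c_def)
  have "inner a b \<le> norm a * norm b" by (rule norm_cauchy_schwarz)
  then have c1: "c \<le> 1" using L2 nab by (simp add: c_def L2_def power2_eq_square)
  define s where "s = cs z"
  define t where "t = ct z"
  have zP: "z \<in> P" using z G_sub_P by blast
  have st: "0 \<le> s" "s \<le> 1" "0 \<le> t" "t \<le> 1" using zP by (auto simp: P_def s_def t_def)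
  have w: "z - p = s *\<^sub>R a + t *\<^sub>R b" using coord_eq[of z] by (simp add: s_def t_def algebra_simps)
  have nw: "(norm (z - p))^2 = L2*(s^2+t^2+2 * s * t * c)"
    unfolding power2_norm_eq_inner w
    by (simp add: inner_add_left inner_add_right aa bb ab ba algebra_simps power2_eq_square)
  have "(norm (z - p))^2 \<le> (norm a / 2)^2" using zr norm_ge_zero[of "z-p"] by (rule power_mono)
  then have "(norm (z - p))^2 \<le> L2/4" unfolding L2_def by (simp add: power_divide)
  then have "L2 * (s^2+t^2+2 * s * t * c) \<le> L2 * (1/4)" using nw by simp
  then have q: "s^2+t^2+2 * s * t * c \<le> 1/4" using L2 mult_le_cancel_left_pos by blast
  have "0 \<le> 2 * s * t * c" using st c0 by simp
  then have h: "s^2 \<le> 1/4" "t^2 \<le> 1/4" using q zero_le_power2[of s] zero_le_power2[of t] by linarith+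
  have h4: "(1/2::real)^2 = 1/4" by (simp add: power2_eq_square)
  have "s^2 \<le> (1/2)^2" "t^2 \<le> (1/2)^2" using h unfolding h4 by simp_all
  then have s2: "s \<le> 1/2" "t \<le> 1/2" using st by (simp_all add: power2_le_iff_abs_le)
  have sig: "sqrt ((1 - inner a b / (norm a)^2)/2) = sqrt ((1-c)/2)" by (simp add: c_def L2_def)
  show ?thesis
  proof (cases "t \<le> s")
    case True
    have "p + (s + t*c) *\<^sub>R a \<in> frontier G"
      using st s2 c0 c1 mult_left_le[of c t] by (intro side_a_fr) auto
    then have "dG G z \<le> dist z (p + (s + t*c) *\<^sub>R a)" by (rule dG_le)
    also have "\<dots> = norm ((z - p) - (s + t*c) *\<^sub>R a)" by (simp add: dist_norm algebra_simps)
    also have "\<dots> \<le> sqrt ((1-c)/2) * norm (z - p)"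
      by (rule proj_bound[OF aa bb ab c0 c1 L2 _ True w]) (use st in auto)
    finally show ?thesis unfolding sig .
  next
    case False
    have w': "z - p = t *\<^sub>R b + s *\<^sub>R a" using w by (simp add: algebra_simps)
    have "p + (t + s*c) *\<^sub>R b \<in> frontier G"
      using st s2 c0 c1 mult_left_le[of c s] by (intro side_b_fr) auto
    then have "dG G z \<le> dist z (p + (t + s*c) *\<^sub>R b)" by (rule dG_le)
    also have "\<dots> = norm ((z - p) - (t + s*c) *\<^sub>R b)" by (simp add: dist_norm algebra_simps)
    also have "\<dots> \<le> sqrt ((1-c)/2) * norm (z - p)"
      by (rule proj_bound[OF bb aa ba c0 c1 L2 _ _ w']) (use st False in auto)
    finally show ?thesis unfolding sig .
  qed
qed

end

lemma path_log_bound: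
  fixes g :: "real \<Rightarrow> real^2" and G :: "(real^2) set" and v :: "real^2" and \<sigma> :: real
  assumes pw: "g piecewise_C1_differentiable_on {0..1}"
    and u: "0 \<le> u0" "u0 \<le> u1" "u1 \<le> 1"
    and pos: "\<And>t. t \<in> {u0..u1} \<Longrightarrow> 0 < dG G (g t)"
    and le: "\<And>t. t \<in> {u0..u1} \<Longrightarrow> dG G (g t) \<le> \<sigma> * norm (g t - v)"
    and sg: "0 < \<sigma>"
    and int: "(\<lambda>t. norm (vector_derivative g (at t)) / dG G (g t)) integrable_on {u0..u1}"
  shows "\<bar>ln (norm (g u1 - v)) - ln (norm (g u0 - v))\<bar>
     \<le> \<sigma> * integral {u0..u1} (\<lambda>t. norm (vector_derivative g (at t)) / dG G (g t))"
proof -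
  define f where "f = (\<lambda>t. norm (vector_derivative g (at t)) / dG G (g t))"
  obtain K D where K: "finite K" and D: "\<And>x. x \<in> {0..1} - K \<Longrightarrow> (g has_vector_derivative D x) (at x)"
    and cg: "continuous_on {0..1} g"
    using pw unfolding piecewise_C1_differentiable_on_def C1_differentiable_on_def by blast
  have nz: "0 < norm (g t - v)" if "t \<in> {u0..u1}" for t
  proof -
    have "0 < \<sigma> * norm (g t - v)" using pos[OF that] le[OF that] by linarith
    then show ?thesis using sg by (simp add: zero_less_mult_iff)
  qed
  define H where "H = (\<lambda>t. if t \<in> K then 0 else inner (D t) (sgn (g t - v)) / norm (g t - v))"
  have cg': "continuous_on {u0..u1} g" using u by (intro continuous_on_subset[OF cg]) auto
  have ch: "continuous_on {u0..u1} (\<lambda>t. ln (norm (g t - v)))"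
    using nz by (intro continuous_intros cg') auto
  have hd: "((\<lambda>t. ln (norm (g t - v))) has_vector_derivative H t) (at t)" if t: "t \<in> {u0<..<u1} - K" for t
  proof -
    have t01: "t \<in> {0..1} - K" using t u by auto
    have tu: "t \<in> {u0..u1}" using t by auto
    let ?w = "g t - v"
    have wnz: "?w \<noteq> 0" using nz[OF tu] by auto
    have gd: "(g has_derivative (\<lambda>h. h *\<^sub>R D t)) (at t)"
      using D[OF t01] by (simp add: has_vector_derivative_def)
    have gd2: "((\<lambda>t. g t - v) has_derivative (\<lambda>h. h *\<^sub>R D t)) (at t)"
      using has_derivative_diff[OF gd has_derivative_const[of v]] by simp
    have nd: "((\<lambda>t. norm (g t - v)) has_derivative (\<lambda>h. inner (h *\<^sub>R D t) (sgn ?w))) (at t)"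
      using has_derivative_compose[OF gd2 has_derivative_norm[OF wnz]] by simp
    have lnd: "(ln has_derivative (\<lambda>h. inverse (norm ?w) * h)) (at (norm ?w))"
      using DERIV_ln[of "norm ?w"] wnz by (simp add: has_field_derivative_def)
    have "((\<lambda>t. ln (norm (g t - v))) has_derivative (\<lambda>h. inverse (norm ?w) * inner (h *\<^sub>R D t) (sgn ?w))) (at t)"
      using has_derivative_compose[OF nd lnd] by simp
    then show ?thesis unfolding has_vector_derivative_def
      by (rule has_derivative_eq_rhs) (use t in \<open>auto simp: H_def fun_eq_iff divide_inverse\<close>)
  qed
  have ftc: "(H has_integral (ln (norm (g u1 - v)) - ln (norm (g u0 - v)))) {u0..u1}"
    by (rule fundamental_theorem_of_calculus_interior_strong[OF K u(2) hd ch])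
  have fint: "((\<lambda>t. \<sigma> * f t) has_integral (\<sigma> * integral {u0..u1} f)) {u0..u1}"
    using int unfolding f_def[symmetric] by (intro has_integral_mult_right integrable_integral)
  have bnd: "\<bar>H t\<bar> \<le> \<sigma> * f t" if tu: "t \<in> {u0..u1}" for t
  proof (cases "t \<in> K")
    case True
    then show ?thesis using pos[OF tu] sg by (simp add: H_def f_def)
  next
    case False
    have t01: "t \<in> {0..1} - K" using tu u False by auto
    have vd: "vector_derivative g (at t) = D t" using D[OF t01] by (rule vector_derivative_at)
    let ?w = "g t - v"
    have wnz: "?w \<noteq> 0" using nz[OF tu] by auto
    have "\<bar>inner (D t) (sgn ?w)\<bar> \<le> norm (D t)"
      using Cauchy_Schwarz_ineq2[of "D t" "sgn ?w"] wnz by (simp add: norm_sgn)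
    then have "\<bar>H t\<bar> \<le> norm (D t) / norm ?w"
      using False nz[OF tu] by (simp add: H_def abs_divide divide_right_mono)
    also have "\<dots> = \<sigma> * (norm (D t) / (\<sigma> * norm ?w))" using sg by simp
    also have "\<dots> \<le> \<sigma> * (norm (D t) / dG G (g t))"
      using pos[OF tu] le[OF tu] sg by (intro mult_left_mono divide_left_mono) auto
    finally show ?thesis by (simp add: f_def vd)
  qed
  have "ln (norm (g u1 - v)) - ln (norm (g u0 - v)) \<le> \<sigma> * integral {u0..u1} f"
    by (rule has_integral_le[OF ftc fint]) (use bnd in fastforce)
  moreover have "-(ln (norm (g u1 - v)) - ln (norm (g u0 - v))) \<le> \<sigma> * integral {u0..u1} f"
    by (rule has_integral_le[OF has_integral_neg[OF ftc] fint]) (use bnd in fastforce)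
  ultimately show ?thesis unfolding f_def by linarith
qed

lemma first_exit:
  fixes \<phi> :: "real \<Rightarrow> real"
  assumes c: "continuous_on {0..1} \<phi>" and a: "\<phi> 0 < R" and b: "R \<le> \<phi> 1"
  shows "\<exists>t1. 0 \<le> t1 \<and> t1 \<le> 1 \<and> \<phi> t1 = R \<and> (\<forall>t\<in>{0..t1}. \<phi> t \<le> R)"
proof -
  define T where "T = {t \<in> {0..1}. \<phi> t = R}"
  have ne: "T \<noteq> {}"
    using IVT'[of \<phi> 0 R 1, OF less_imp_le[OF a] b _ c] by (auto simp: T_def)
  have cl: "closed T"
    unfolding T_def using continuous_closed_preimage_constant[OF c closed_atLeastAtMost] by (simp add: Int_def conj_commute)
  have bd: "bdd_below T" by (auto simp: T_def bdd_below_def)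
  define t1 where "t1 = Inf T"
  have t1T: "t1 \<in> T" unfolding t1_def by (rule closed_contains_Inf[OF ne bd cl])
  have "\<phi> t \<le> R" if t: "t \<in> {0..t1}" for t
  proof (rule ccontr)
    assume "\<not> \<phi> t \<le> R"
    then have "R \<le> \<phi> t" by simp
    have ct: "continuous_on {0..t} \<phi>" using t t1T by (intro continuous_on_subset[OF c]) (auto simp: T_def)
    obtain s where s: "0 \<le> s" "s \<le> t" "\<phi> s = R"
      using IVT'[of \<phi> 0 R t, OF less_imp_le[OF a] \<open>R \<le> \<phi> t\<close> _ ct] t by auto
    have "s \<in> T" using s t t1T by (auto simp: T_def)
    then have "t1 \<le> s" unfolding t1_def using bd by (rule cInf_lower)
    then have "s = t" "t = t1" using s t by auto
    then show False using t1T \<open>\<not> \<phi> t \<le> R\<close> by (auto simp: T_def)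
  qed
  then show ?thesis using t1T by (auto simp: T_def)
qed

lemma pure_limit:
  fixes A K Ca Cb :: real
  assumes A: "0 \<le> A" and K: "0 < K"
    and H: "\<And>l. l \<ge> Lb \<Longrightarrow> K * (Cb + l) \<le> A * (Ca + l)"
  shows "K \<le> A"
proof (rule ccontr)
  assume "\<not> K \<le> A"
  then have KA: "0 < K - A" by simp
  define l where "l = max Lb ((\<bar>A * Ca\<bar> + \<bar>K * Cb\<bar> + 1) / (K - A))"
  have "K * (Cb + l) \<le> A * (Ca + l)" using H by (simp add: l_def)
  then have "(K - A) * l \<le> A * Ca - K * Cb" by (simp add: algebra_simps)
  moreover have "(K - A) * ((\<bar>A * Ca\<bar> + \<bar>K * Cb\<bar> + 1) / (K - A)) \<le> (K - A) * l"
    using KA by (intro mult_left_mono) (auto simp: l_def)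
  ultimately show False using KA by simp
qed

lemma adm_linepath:
  assumes G: "convex G" "open G" and pos: "\<And>z. z \<in> G \<Longrightarrow> 0 < dG G z"
    and xy: "x \<in> G" "y \<in> G"
  shows "qh_admissible G x y (linepath x y)"
proof -
  have seg: "closed_segment x y \<subseteq> G" using xy G by (intro closed_segment_subset) auto
  have img: "linepath x y t \<in> G" if "t \<in> {0..1}" for t
  proof -
    have "linepath x y t \<in> path_image (linepath x y)" unfolding path_image_def using that by blast
    then show ?thesis using seg by (simp only: path_image_linepath) blast
  qed
  have "continuous_on {0..1} (\<lambda>t. norm (y - x) / dG G (linepath x y t))"
  proof (rule continuous_on_divide[OF continuous_on_const])
    show "continuous_on {0..1} (\<lambda>t. dG G (linepath x y t))" unfolding dG_def
      by (intro continuous_intros)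
    show "\<forall>t\<in>{0..1}. dG G (linepath x y t) \<noteq> 0" using pos img by (metis less_irrefl)
  qed
  then have "(\<lambda>t. norm (vector_derivative (linepath x y) (at t)) / dG G (linepath x y t)) integrable_on {0..1}"
    by (simp add: integrable_continuous_real)
  moreover have "linepath x y piecewise_C1_differentiable_on {0..1}"
    using valid_path_linepath unfolding valid_path_def .
  ultimately show ?thesis unfolding qh_admissible_def using seg by simp
qed

context rh begin

lemma Lag: "(inner a b)^2 + dt^2 = (norm a)^2 * (norm b)^2"
  unfolding normsq2 inner2 dt_def by (simp add: power2_eq_square algebra_simps)

lemma c_lt1: "inner a b < (norm a)^2"
proof -
  have "dt^2 > 0" using dtnz by simp
  then have "(inner a b)^2 < ((norm a)^2)^2" using Lag nab by (simp add: power2_eq_square)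
  then show ?thesis using ipos
    by (metis abs_of_nonneg power2_less_imp_less zero_le_power2)
qed

lemma sig_pos: "0 < sqrt ((1 - inner a b / (norm a)^2)/2)"
  using c_lt1 anz by (simp add: field_simps)

lemma M_gt: "norm a < norm (a + b)"
proof -
  have "(norm (a+b))^2 = (norm a)^2 + (norm b)^2 + 2 * inner a b"
    by (simp add: power2_norm_eq_inner inner_add_left inner_add_right inner_commute)
  moreover have "0 < (norm b)^2" using bnz by simp
  ultimately have "(norm a)^2 < (norm (a+b))^2" using ipos by linarith
  then show ?thesis by (simp add: power_less_imp_less_base)
qed

lemma M_le: "norm (a + b) \<le> 2 * norm a"
  using norm_triangle_ineq[of a b] nab by simp

lemma G_convex: "convex G" using G_eq convex_P by simp

lemma k_lower:
  assumes e: "0 < e" "e \<le> 1/8"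
  defines "x \<equiv> p + e *\<^sub>R a + e *\<^sub>R b" and "y \<equiv> p + (1-e) *\<^sub>R a + (1-e) *\<^sub>R b"
  shows "2 / sqrt ((1 - inner a b / (norm a)^2)/2) * (ln (norm a / 2) - ln (e * norm (a+b))) \<le> kG G x y"
proof -
  define \<sigma> where "\<sigma> = sqrt ((1 - inner a b / (norm a)^2)/2)"
  define R where "R = norm a / 2"
  define M where "M = norm (a + b)"
  define q where "q = p + a + b"
  have sg: "0 < \<sigma>" using sig_pos by (simp add: \<sigma>_def)
  have Lp: "0 < norm a" using anz by simp
  have MgL: "norm a < M" using M_gt by (simp add: M_def)
  have hML: "M \<le> 2 * norm a" using M_le by (simp add: M_def)
  have xG: "x \<in> G"
    using ball_in_G[of e e e] e kap_pos by (auto simp: x_def)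
  have yG: "y \<in> G"
    using ball_in_G[of e "1-e" "1-e"] e kap_pos by (auto simp: y_def)
  interpret fl: rh "p+a+b" "-a" "-b" G
  proof
    show "-a \<noteq> 0" using anz by simp
    show "norm (-a) = norm (-b)" using nab by simp
    show "0 \<le> inner (-a) (-b)" using ipos by simp
    show "(-a)$1 * (-b)$2 - (-a)$2 * (-b)$1 \<noteq> 0" using detnz by simp
    have "{p+a+b, p+a+b+-a, p+a+b+-a+-b, p+a+b+-b} = {p, p+a, p+a+b, p+b}"
      by (auto simp: algebra_simps)
    then show "G = interior (convex hull {p+a+b, p+a+b+-a, p+a+b+-a+-b, p+a+b+-b})"
      using Gdef by simp
  qed
  have nv1: "dG G z \<le> \<sigma> * norm (z - p)" if "z \<in> G" "norm (z - p) \<le> R" for z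
    using near_vertex[OF that(1)] that(2) by (simp add: \<sigma>_def R_def)
  have nv2: "dG G z \<le> \<sigma> * norm (z - q)" if "z \<in> G" "norm (z - q) \<le> R" for z
    using fl.near_vertex[OF that(1)] that(2) by (simp add: \<sigma>_def R_def q_def)
  have xp: "norm (x - p) = e * M" using e by (simp add: x_def M_def scaleR_add_right[symmetric])
  have yq: "norm (y - q) = e * M"
  proof -
    have "y - q = (-e) *\<^sub>R (a + b)" by (simp add: y_def q_def algebra_simps)
    then show ?thesis using e by (simp add: M_def)
  qed
  have yp: "norm (y - p) = (1-e) * M" using e by (simp add: y_def M_def scaleR_add_right[symmetric])
  have xq: "norm (x - q) = (1-e) * M"
  proof -
    have "x - q = (-(1-e)) *\<^sub>R (a + b)" by (simp add: x_def q_def algebra_simps)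
    then show ?thesis using e by (simp add: M_def)
  qed
  have Mp: "0 < M" using MgL Lp by linarith
  have "e * M \<le> (1/8) * M" using e Mp by (intro mult_right_mono) auto
  then have eMR: "e * M < R" using hML Lp unfolding R_def by linarith
  have "(7/8) * M \<le> (1-e) * M" using e Mp by (intro mult_right_mono) auto
  then have eMR': "R \<le> (1-e) * M" using MgL Lp unfolding R_def by linarith
  have eMp: "0 < e * M" using e Mp by simp
  let ?S = "{qh_length G g |g. qh_admissible G x y g}"
  have ne: "?S \<noteq> {}"
    using adm_linepath[OF G_convex G_open dG_pos xG yG] by blast
  have "2 / \<sigma> * (ln R - ln (e * M)) \<le> Inf ?S"
  proof (rule cInf_greatest[OF ne])
    fix l assume "l \<in> ?S"
    then obtain g where g: "qh_admissible G x y g" and l: "l = qh_length G g" by blast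
    define f where "f = (\<lambda>t. norm (vector_derivative g (at t)) / dG G (g t))"
    have pw: "g piecewise_C1_differentiable_on {0..1}" and cg: "continuous_on {0..1} g"
      and gG: "\<And>t. t \<in> {0..1} \<Longrightarrow> g t \<in> G" and g0: "g 0 = x" and g1: "g 1 = y"
      and fi: "f integrable_on {0..1}"
      using g unfolding qh_admissible_def path_def path_image_def pathstart_def pathfinish_def f_def
      by auto
    have f0: "0 \<le> f t" for t unfolding f_def dG_def by (simp add: infdist_nonneg)
    obtain t1 where t1: "0 \<le> t1" "t1 \<le> 1" "norm (g t1 - p) = R" "\<forall>t\<in>{0..t1}. norm (g t - p) \<le> R"
    proof -
      have "continuous_on {0..1} (\<lambda>t. norm (g t - p))" by (intro continuous_intros cg)
      moreover have "norm (g 0 - p) < R" "R \<le> norm (g 1 - p)" using eMR eMR' g0 g1 xp yp by auto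
      ultimately show ?thesis using first_exit[of "\<lambda>t. norm (g t - p)" R] that by blast
    qed
    have cg2: "continuous_on {0..1} (\<lambda>t. norm (g (1 - t) - q))"
      by (intro continuous_intros continuous_on_compose2[OF cg]) auto
    obtain s where s: "0 \<le> s" "s \<le> 1" "norm (g (1-s) - q) = R" "\<forall>t\<in>{0..s}. norm (g (1-t) - q) \<le> R"
      using first_exit[OF cg2, of R] eMR eMR' g0 g1 yq xq by auto
    define t2 where "t2 = 1 - s"
    have t2: "0 \<le> t2" "t2 \<le> 1" "norm (g t2 - q) = R" "\<forall>t\<in>{t2..1}. norm (g t - q) \<le> R"
    proof -
      show "0 \<le> t2" "t2 \<le> 1" "norm (g t2 - q) = R" using s by (auto simp: t2_def)
      show "\<forall>t\<in>{t2..1}. norm (g t - q) \<le> R"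
      proof
        fix t assume "t \<in> {t2..1}"
        then have "1 - t \<in> {0..s}" by (auto simp: t2_def)
        then show "norm (g t - q) \<le> R" using s(4) by fastforce
      qed
    qed
    have t12: "t1 \<le> t2"
    proof (rule ccontr)
      assume "\<not> t1 \<le> t2"
      then have "norm (g t1 - q) \<le> R" using t2(4) t1 by auto
      moreover have "M \<le> norm (g t1 - p) + norm (g t1 - q)"
        using norm_triangle_ineq4[of "g t1 - p" "g t1 - q"] by (simp add: M_def q_def algebra_simps norm_minus_commute)
      ultimately show False using t1(3) MgL unfolding R_def by simp
    qed
    have b1: "\<bar>ln (norm (g t1 - p)) - ln (norm (g 0 - p))\<bar> \<le> \<sigma> * integral {0..t1} f"
      unfolding f_def
    proof (rule path_log_bound[OF pw _ t1(1) t1(2) _ _ sg])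
      show "0 \<le> (0::real)" by simp
      fix t assume t: "t \<in> {0..t1}"
      then have tG: "g t \<in> G" using gG t1 by auto
      show "0 < dG G (g t)" using dG_pos[OF tG] .
      show "dG G (g t) \<le> \<sigma> * norm (g t - p)" using nv1[OF tG] t1(4) t by auto
    next
      show "(\<lambda>t. norm (vector_derivative g (at t)) / dG G (g t)) integrable_on {0..t1}"
        using integrable_subinterval_real[OF fi, of 0 t1] t1 unfolding f_def by auto
    qed
    have b2: "\<bar>ln (norm (g 1 - q)) - ln (norm (g t2 - q))\<bar> \<le> \<sigma> * integral {t2..1} f"
      unfolding f_def
    proof (rule path_log_bound[OF pw t2(1) _ _ _ _ sg])
      show "t2 \<le> 1" using t2 by simp
      show "(1::real) \<le> 1" by simp
      fix t assume t: "t \<in> {t2..1}"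
      then have tG: "g t \<in> G" using gG t2 by auto
      show "0 < dG G (g t)" using dG_pos[OF tG] .
      show "dG G (g t) \<le> \<sigma> * norm (g t - q)" using nv2[OF tG] t2(4) t by auto
    next
      show "(\<lambda>t. norm (vector_derivative g (at t)) / dG G (g t)) integrable_on {t2..1}"
        using integrable_subinterval_real[OF fi, of t2 1] t2 unfolding f_def by auto
    qed
    have i1: "ln R - ln (e * M) \<le> \<sigma> * integral {0..t1} f" using b1 t1(3) g0 xp by simp
    have i3: "ln R - ln (e * M) \<le> \<sigma> * integral {t2..1} f" using b2 t2(3) g1 yq by simp
    have c1: "integral {0..t1} f + integral {t1..1} f = integral {0..1} f"
      using Henstock_Kurzweil_Integration.integral_combine[OF t1(1) t1(2) fi] .
    have c2: "integral {t1..t2} f + integral {t2..1} f = integral {t1..1} f"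
      using Henstock_Kurzweil_Integration.integral_combine[OF t12 t2(2) integrable_subinterval_real[OF fi]] t1 by auto
    have i2: "0 \<le> integral {t1..t2} f" using f0 by (intro integral_nonneg integrable_subinterval_real[OF fi]) (use t1 t2 in auto)
    have i2': "0 \<le> \<sigma> * integral {t1..t2} f" using i2 sg by simp
    have hsum: "\<sigma> * integral {0..1} f = \<sigma> * integral {0..t1} f + \<sigma> * integral {t1..t2} f + \<sigma> * integral {t2..1} f"
      unfolding c1[symmetric] c2[symmetric] by (simp add: distrib_left)
    have "2 * (ln R - ln (e * M)) \<le> \<sigma> * integral {0..1} f" using i1 i2' i3 hsum by (smt (verit))
    then have "2 / \<sigma> * (ln R - ln (e * M)) \<le> integral {0..1} f"
      using sg by (simp add: field_simps)
    then show "2 / \<sigma> * (ln R - ln (e * M)) \<le> l" by (simp add: l qh_length_def f_def)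
  qed
  then show ?thesis by (simp add: kG_def \<sigma>_def R_def M_def)
qed

end

context rh begin

lemma main_loc:
  assumes A1: "1 \<le> A" and AH: "\<forall>x\<in>G. \<forall>y\<in>G. kG G x y \<le> A * jG G x y"
  shows "2 / sqrt ((1 - inner a b / (norm a)^2)/2) \<le> A"
proof -
  define \<sigma> where "\<sigma> = sqrt ((1 - inner a b / (norm a)^2)/2)"
  define R where "R = norm a / 2"
  define M where "M = norm (a + b)"
  have sg: "0 < \<sigma>" using sig_pos by (simp add: \<sigma>_def)
  have Lp: "0 < norm a" using anz by simp
  have "norm a < M" using M_gt by (simp add: M_def)
  then have Mp: "0 < M" using Lp by linarith
  have Rp: "0 < R" using Lp by (simp add: R_def)
  have kp: "0 < kap" by (rule kap_pos)
  show ?thesis unfolding \<sigma>_def[symmetric]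
  proof (rule pure_limit[where Lb = "ln 8" and Cb = "ln R - ln M" and Ca = "ln ((kap + M) / kap)"])
    show "0 \<le> A" using A1 by simp
    show "0 < 2 / \<sigma>" using sg by simp
    fix l :: real assume l: "ln 8 \<le> l"
    define e where "e = exp (- l)"
    have ep: "0 < e" by (simp add: e_def)
    have "e \<le> exp (- ln 8)" unfolding e_def using l by simp
    then have e8: "e \<le> 1/8" by (simp add: exp_minus)
    have le: "ln e = - l" by (simp add: e_def)
    define x where "x = p + e *\<^sub>R a + e *\<^sub>R b"
    define y where "y = p + (1-e) *\<^sub>R a + (1-e) *\<^sub>R b"
    have kl: "2 / \<sigma> * (ln R - ln (e * M)) \<le> kG G x y"
      using k_lower[OF ep e8] by (simp add: \<sigma>_def R_def M_def x_def y_def)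
    have "ln (e * M) = - l + ln M" using ep Mp le by (simp add: ln_mult)
    then have eq2: "ln R - ln (e * M) = ln R - ln M + l" by linarith
    have kl2: "2 / \<sigma> * (ln R - ln M + l) \<le> kG G x y" using kl unfolding eq2 .
    have bx: "ball x (kap * e) \<subseteq> G" unfolding x_def by (rule ball_in_G) (use ep e8 in auto)
    have by': "ball y (kap * e) \<subseteq> G" unfolding y_def by (rule ball_in_G) (use ep e8 in auto)
    have xG: "x \<in> G" using bx kp ep by (meson centre_in_ball mult_pos_pos subsetD)
    have yG: "y \<in> G" using by' kp ep by (meson centre_in_ball mult_pos_pos subsetD)
    have dx: "kap * e \<le> dG G x" by (rule dG_ge[OF bx])
    have dy: "kap * e \<le> dG G y" by (rule dG_ge[OF by'])
    have mn: "kap * e \<le> min (dG G x) (dG G y)" using dx dy by simp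
    have kep: "0 < kap * e" using kp ep by simp
    have "x - y = (2*e - 1) *\<^sub>R (a + b)" unfolding vec2_eq by (simp add: x_def y_def algebra_simps)
    then have dxy: "dist x y = \<bar>2*e - 1\<bar> * M" by (simp add: dist_norm M_def)
    have "\<bar>2*e - 1\<bar> \<le> 1" using ep e8 by simp
    then have dxy2: "dist x y \<le> M" using dxy Mp by (simp add: mult_left_le_one_le)
    have q1: "dist x y / min (dG G x) (dG G y) \<le> M / (kap * e)"
      by (rule frac_le) (use Mp dxy2 kep mn in auto)
    have q2: "1 + M / (kap * e) \<le> (kap + M) / (kap * e)"
    proof -
      have "kap * e \<le> kap" using kp e8 ep by (simp add: mult_left_le)
      then have "1 \<le> kap / (kap * e)" using kep by (simp add: le_divide_eq)
        (use ep e8 in auto)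
      then show ?thesis by (simp add: add_divide_distrib)
    qed
    have pos1: "0 < 1 + dist x y / min (dG G x) (dG G y)"
      using kep mn by (smt (verit) divide_nonneg_pos zero_le_dist)
    have "jG G x y \<le> ln ((kap + M) / (kap * e))"
      unfolding jG_def using q1 q2 pos1 by (subst ln_le_cancel_iff) (use kep Mp kp in auto)
    also have "ln ((kap + M) / (kap * e)) = ln ((kap + M) / kap) + l"
      using kp ep Mp le by (simp add: ln_div ln_mult)
    finally have jl: "jG G x y \<le> ln ((kap + M) / kap) + l" .
    have "kG G x y \<le> A * jG G x y" using AH xG yG by blast
    also have "\<dots> \<le> A * (ln ((kap + M) / kap) + l)" using jl A1 by (intro mult_left_mono) auto
    finally show "2 / \<sigma> * (ln R - ln M + l) \<le> A * (ln ((kap + M) / kap) + l)" using kl2 by linarith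
  qed
qed

end

lemma Lag2: "(inner a b)^2 + (a$1*b$2 - a$2*b$1)^2 = (norm (a::real^2))^2 * (norm b)^2"
  unfolding normsq2 inner2 by (simp add: power2_eq_square algebra_simps)

lemma case_ok:
  fixes p a b :: "real^2"
  assumes anz: "a \<noteq> 0" and nab: "norm a = norm b" and th0: "0 < vec_angle a b" and th1: "vec_angle a b \<le> pi/2"
    and Gd: "G = interior (convex hull {p, p+a, p+a+b, p+b})"
    and A1: "1 \<le> A" and AH: "\<forall>x\<in>G. \<forall>y\<in>G. kG G x y \<le> A * jG G x y"
  shows "2 / sin (vec_angle a b / 2) \<le> A"
proof -
  define c where "c = inner a b / (norm a * norm b)"
  have Lp: "0 < norm a" using anz by simp
  have ab: "norm a * norm b = (norm a)^2" using nab by (simp add: power2_eq_square)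
  have cabs: "\<bar>c\<bar> \<le> 1"
    using Cauchy_Schwarz_ineq2[of a b] Lp nab by (simp add: c_def abs_divide divide_le_eq_1)
  then have cb: "-1 \<le> c" "c \<le> 1" by auto
  define \<theta> where "\<theta> = vec_angle a b"
  have th: "\<theta> = arccos c" by (simp add: \<theta>_def vec_angle_def c_def)
  have cth: "cos \<theta> = c" using th cb by simp
  have c0: "0 \<le> c" using cos_ge_zero[of \<theta>] th0 th1 cth by (simp add: \<theta>_def)
  have c1: "c < 1"
  proof (rule ccontr)
    assume "\<not> c < 1" then have "c = 1" using cb by simp
    then show False using th th0 by (simp add: \<theta>_def)
  qed
  have "inner a b = c * (norm a * norm b)" using Lp nab by (simp add: c_def)
  then have ip: "0 \<le> inner a b" using c0 by simp
  have cdef2: "c = inner a b / (norm a)^2" using ab by (simp add: c_def)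
  have ilt: "inner a b < (norm a)^2" using c1 Lp by (simp add: cdef2 divide_less_eq_1)
  have det: "a$1*b$2 - a$2*b$1 \<noteq> 0"
  proof
    assume d: "a$1*b$2 - a$2*b$1 = 0"
    have "(inner a b)^2 = ((norm a)^2)^2" using Lag2[of a b] d nab by (simp add: power2_eq_square)
    then have "inner a b = (norm a)^2" using ip by (metis power2_eq_iff_nonneg zero_le_power2)
    then show False using ilt by simp
  qed
  interpret rh p a b G using anz nab ip det Gd by unfold_locales auto
  have m: "2 / sqrt ((1 - inner a b / (norm a)^2)/2) \<le> A" by (rule main_loc[OF A1 AH])
  have "sqrt ((1 - inner a b / (norm a)^2)/2) = sin (\<theta>/2)"
  proof -
    have "cos \<theta> = 1 - 2 * (sin (\<theta>/2))^2" using cos_double_sin[of "\<theta>/2"] by simp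
    then have "(1 - inner a b / (norm a)^2)/2 = (sin (\<theta>/2))^2" using cth cdef2 by simp
    moreover have "0 \<le> sin (\<theta>/2)" using th0 th1 by (intro sin_ge_zero) (auto simp: \<theta>_def)
    ultimately show ?thesis by simp
  qed
  then show ?thesis using m by (simp add: \<theta>_def)
qed

lemma vec_angle_neg:
  fixes a b :: "real^2"
  assumes "a \<noteq> 0" "b \<noteq> 0"
  shows "vec_angle (-a) b = pi - vec_angle a b"
proof -
  define c where "c = inner a b / (norm a * norm b)"
  have "\<bar>c\<bar> \<le> 1"
    using Cauchy_Schwarz_ineq2[of a b] assms by (simp add: c_def abs_divide divide_le_eq_1)
  then have "-1 \<le> c" "c \<le> 1" by auto
  moreover have "inner (-a) b / (norm (-a) * norm b) = - c" by (simp add: c_def)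
  ultimately show ?thesis unfolding vec_angle_def c_def[symmetric] using arccos_minus[of c] by simp
qed

theorem theorem5p4:
  fixes G :: "(real ^ 2) set" and \<alpha> :: real
  assumes "rhombus_domain G \<alpha>"
  shows "uniformity_constant G \<ge> ereal (2 / sin (\<alpha> / 2))"
proof -
  obtain p a b where anz: "a \<noteq> 0" and nab: "norm a = norm b" and th0: "0 < vec_angle a b"
    and thpi: "vec_angle a b < pi" and Gd: "G = interior (convex hull {p, p + a, p + a + b, p + b})"
    and al: "\<alpha> = min (vec_angle a b) (pi - vec_angle a b)"
    using assms unfolding rhombus_domain_def by blast
  have bnz: "b \<noteq> 0" using anz nab by auto
  have key: "2 / sin (\<alpha> / 2) \<le> A" if A1: "1 \<le> A" and AH: "\<forall>x\<in>G. \<forall>y\<in>G. kG G x y \<le> A * jG G x y" for A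
  proof (cases "vec_angle a b \<le> pi/2")
    case True
    then have "\<alpha> = vec_angle a b" using al by simp
    then show ?thesis using case_ok[OF anz nab th0 True Gd A1 AH] by simp
  next
    case False
    have va: "vec_angle (-a) b = pi - vec_angle a b" by (rule vec_angle_neg[OF anz bnz])
    then have "\<alpha> = vec_angle (-a) b" using al False by simp
    moreover have "2 / sin (vec_angle (-a) b / 2) \<le> A"
    proof (rule case_ok[where p = "p + a"])
      show "-a \<noteq> 0" using anz by simp
      show "norm (-a) = norm b" using nab by simp
      show "0 < vec_angle (-a) b" using va thpi by simp
      show "vec_angle (-a) b \<le> pi/2" using va False by simp
      have "{p + a, p + a + -a, p + a + -a + b, p + a + b} = {p, p + a, p + a + b, p + b}"
        by (auto simp: algebra_simps)
      then show "G = interior (convex hull {p + a, p + a + -a, p + a + -a + b, p + a + b})"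
        using Gd by simp
    qed (use A1 AH in auto)
    ultimately show ?thesis by simp
  qed
  show ?thesis unfolding uniformity_constant_def le_Inf_iff
    using key by auto
qed

end
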